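(* Let $K$ be a non-degenerate Zygmund invariant kernel on $\mathbb{R}^3$ and $b\in L^1_{\mathrm{loc}}(\mathbb{R}^3)$. Then for all $1<u,t<\infty$ and all Zygmund rectangles $R$, $$\mathrm{osc}(b,R)\lesssim \mathrm{Off}_u^t\,|R|^{1/u-1/t},$$ with implicit constant depending only on $K$.
   Context: Fix $0<\theta\le 1$. For $t_1,t_2,t_3>0$ set $D_\theta(t_1,t_2,t_3) := \big(\frac{t_3}{t_1t_2}+\frac{t_1t_2}{t_3}\big)^{-\theta}$ and $S_Z(t_1,t_2,t_3) := \frac{D_\theta(t_1,t_2,t_3)}{t_1t_2t_3}$. Let $\Delta := \{(x,y) : x_i=y_i \text{ for some } i\}$. A Zygmund invariant kernel is $K:(\mathbb{R}^3\times\mathbb{R}^3)\setminus\Delta\to\mathbb{C}$ with $|K(x,y)|\lesssim S_Z(|x_1-y_1|,|x_2-y_2|,|x_3-y_3|)$ and, for some increasing $\omega:[0,1]\to[0,\infty)$ with $\omega(t)\to 0$ as $t\to0$, whenever $|x_i-x_i'|\le |x_i-y_i|/2$ ($i=1,2,3$): $|K((x_1',x_2,x_3),y)-K(x,y)| \lesssim \omega\big(\frac{|x_1-x_1'|}{|x_1-y_1|}\big) S_Z(|x_1-y_1|,|x_2-y_2|,|x_3-y_3|)$, $|K((x_1,x_2',x_3'),y)-K(x,y)| \lesssim \omega\big(\frac{|x_2-x_2'|}{|x_2-y_2|}+\frac{|x_3-x_3'|}{|x_3-y_3|}\big) S_Z(|x_1-y_1|,|x_2-y_2|,|x_3-y_3|)$,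 and the symmetric conditions in the $y$-variable. $K$ is non-degenerate if there is $c>0$ such that for every $y$ and $\delta_1,\delta_2>0$ there exists $x$ with $|x_1-y_1|>\delta_1$, $|x_2-y_2|>\delta_2$, $|x_3-y_3|>\delta_1\delta_2$ and $|K(x,y)|\ge c\,\delta_1^{-2}\delta_2^{-2}$. A Zygmund rectangle is $R=I^1\times I^2\times I^3$ (intervals) with $\ell(I^3)=\ell(I^1)\ell(I^2)$; $\mathrm{osc}(b,R):=\frac{1}{|R|}\int_R|b-\langle b\rangle_R|$. Off-diagonal constant: for $u,t\in(1,\infty)$, with $B(x,y)=b(x)-b(y)$, $$\mathrm{Off}_u^t := \sup \frac{1}{|P_1|^{1+1/u-1/t}}\Big|\iint B(x,y)K(x,y)f_1(y)f_2(x)\,dy\,dx\Big|,$$ supremum over pairs of Zygmund rectangles $P_1=J^1\times J^2\times J^3$, $P_2=L^1\times L^2\times L^3$ with $\ell(J^i)=\ell(L^i)$ and $C_0^{-1}\ell(J^i)\le\mathrm{dist}(J^i,L^i)\le C_0\ell(J^i)$ ($C_0\ge1$ a fixed constant, possibly depending on $K$), and over $f_i\in L^\infty(P_i)$ with $\|f_i\|_{L^\infty}\le1$. *)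

theory Defs
  imports "HOL-Analysis.Analysis"
begin

definition D_theta :: "real \<Rightarrow> real \<Rightarrow> real \<Rightarrow> real \<Rightarrow> real" where
  "D_theta \<theta> t1 t2 t3 = (t3 / (t1 * t2) + (t1 * t2) / t3) powr (- \<theta>)"

definition S_Z :: "real \<Rightarrow> real \<Rightarrow> real \<Rightarrow> real \<Rightarrow> real" where
  "S_Z \<theta> t1 t2 t3 = D_theta \<theta> t1 t2 t3 / (t1 * t2 * t3)"

definition SZv :: "real \<Rightarrow> real^3 \<Rightarrow> real^3 \<Rightarrow> real" where
  "SZv \<theta> x y = S_Z \<theta> \<bar>x$1 - y$1\<bar> \<bar>x$2 - y$2\<bar> \<bar>x$3 - y$3\<bar>"

definition off_Delta :: "real^3 \<Rightarrow> real^3 \<Rightarrow> bool" where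
  "off_Delta x y \<longleftrightarrow> (\<forall>i. x$i \<noteq> y$i)"

definition zygmund_kernel :: "real \<Rightarrow> (real^3 \<Rightarrow> real^3 \<Rightarrow> complex) \<Rightarrow> bool" where
  "zygmund_kernel \<theta> K \<longleftrightarrow>
    (\<exists>C>0. \<exists>\<omega>::real \<Rightarrow> real.
       mono_on {0..1} \<omega> \<and> (\<forall>s\<in>{0..1}. 0 \<le> \<omega> s) \<and> (\<omega> \<longlongrightarrow> 0) (at_right 0) \<and>
       (\<forall>x y. off_Delta x y \<longrightarrow> cmod (K x y) \<le> C * SZv \<theta> x y) \<and>
       (\<forall>x x' y. off_Delta x y \<and> (\<forall>i. \<bar>x$i - x'$i\<bar> \<le> \<bar>x$i - y$i\<bar> / 2)
          \<and> x'$2 = x$2 \<and> x'$3 = x$3 \<longrightarrow>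
          cmod (K x' y - K x y) \<le> C * \<omega> (\<bar>x$1 - x'$1\<bar> / \<bar>x$1 - y$1\<bar>) * SZv \<theta> x y) \<and>
       (\<forall>x x' y. off_Delta x y \<and> (\<forall>i. \<bar>x$i - x'$i\<bar> \<le> \<bar>x$i - y$i\<bar> / 2)
          \<and> x'$1 = x$1 \<longrightarrow>
          cmod (K x' y - K x y) \<le> C * \<omega> (\<bar>x$2 - x'$2\<bar> / \<bar>x$2 - y$2\<bar> + \<bar>x$3 - x'$3\<bar> / \<bar>x$3 - y$3\<bar>) * SZv \<theta> x y) \<and>
       (\<forall>x y y'. off_Delta x y \<and> (\<forall>i. \<bar>y$i - y'$i\<bar> \<le> \<bar>x$i - y$i\<bar> / 2)
          \<and> y'$2 = y$2 \<and> y'$3 = y$3 \<longrightarrow>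
          cmod (K x y' - K x y) \<le> C * \<omega> (\<bar>y$1 - y'$1\<bar> / \<bar>x$1 - y$1\<bar>) * SZv \<theta> x y) \<and>
       (\<forall>x y y'. off_Delta x y \<and> (\<forall>i. \<bar>y$i - y'$i\<bar> \<le> \<bar>x$i - y$i\<bar> / 2)
          \<and> y'$1 = y$1 \<longrightarrow>
          cmod (K x y' - K x y) \<le> C * \<omega> (\<bar>y$2 - y'$2\<bar> / \<bar>x$2 - y$2\<bar> + \<bar>y$3 - y'$3\<bar> / \<bar>x$3 - y$3\<bar>) * SZv \<theta> x y))"

definition non_degenerate :: "(real^3 \<Rightarrow> real^3 \<Rightarrow> complex) \<Rightarrow> bool" where
  "non_degenerate K \<longleftrightarrow>
    (\<exists>c>0. \<forall>y (\<delta>1::real) (\<delta>2::real). \<delta>1 > 0 \<and> \<delta>2 > 0 \<longrightarrow>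
       (\<exists>x. \<bar>x$1 - y$1\<bar> > \<delta>1 \<and> \<bar>x$2 - y$2\<bar> > \<delta>2 \<and> \<bar>x$3 - y$3\<bar> > \<delta>1 * \<delta>2 \<and>
            cmod (K x y) \<ge> c * \<delta>1 powr (-2) * \<delta>2 powr (-2)))"

definition zyg_rect :: "(real^3) set \<Rightarrow> bool" where
  "zyg_rect R \<longleftrightarrow> (\<exists>a b. R = cbox a b \<and> (\<forall>i. a$i < b$i) \<and>
       b$3 - a$3 = (b$1 - a$1) * (b$2 - a$2))"

definition locally_integrable :: "(real^3 \<Rightarrow> real) \<Rightarrow> bool" where
  "locally_integrable b \<longleftrightarrow> (\<forall>S. compact S \<longrightarrow> set_integrable lborel S b)"

definition avg :: "(real^3 \<Rightarrow> real) \<Rightarrow> (real^3) set \<Rightarrow> real" where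
  "avg b R = (set_lebesgue_integral lborel R b) / measure lborel R"

definition osc :: "(real^3 \<Rightarrow> real) \<Rightarrow> (real^3) set \<Rightarrow> real" where
  "osc b R = (set_lebesgue_integral lborel R (\<lambda>x. \<bar>b x - avg b R\<bar>)) / measure lborel R"

definition adm_pair :: "real \<Rightarrow> (real^3) set \<Rightarrow> (real^3) set \<Rightarrow> bool" where
  "adm_pair C0 P1 P2 \<longleftrightarrow> zyg_rect P1 \<and> zyg_rect P2 \<and>
     (\<exists>a b c d. P1 = cbox a b \<and> P2 = cbox c d \<and>
        (\<forall>i. d$i - c$i = b$i - a$i \<and>
             (b$i - a$i) / C0 \<le> setdist {a$i..b$i} {c$i..d$i} \<and>
             setdist {a$i..b$i} {c$i..d$i} \<le> C0 * (b$i - a$i)))"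

definition bil :: "(real^3 \<Rightarrow> real^3 \<Rightarrow> complex) \<Rightarrow> (real^3 \<Rightarrow> real)
    \<Rightarrow> (real^3) set \<Rightarrow> (real^3) set \<Rightarrow> (real^3 \<Rightarrow> complex) \<Rightarrow> (real^3 \<Rightarrow> complex) \<Rightarrow> complex" where
  "bil K b P1 P2 f1 f2 =
     set_lebesgue_integral lborel P2 (\<lambda>x. set_lebesgue_integral lborel P1
        (\<lambda>y. complex_of_real (b x - b y) * K x y * f1 y * f2 x))"

definition Off :: "(real^3 \<Rightarrow> real^3 \<Rightarrow> complex) \<Rightarrow> (real^3 \<Rightarrow> real) \<Rightarrow> real \<Rightarrow> real \<Rightarrow> real \<Rightarrow> ereal" where
  "Off K b C0 u t =
     (SUP (P1, P2, f1, f2) \<in> {(P1, P2, f1, f2). adm_pair C0 P1 P2 \<and>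
          f1 \<in> borel_measurable lborel \<and> f2 \<in> borel_measurable lborel \<and>
          (\<forall>y. cmod (f1 y) \<le> 1) \<and> (\<forall>x. cmod (f2 x) \<le> 1)}.
        ereal (cmod (bil K b P1 P2 f1 f2) / measure lborel P1 powr (1 + 1/u - 1/t)))"

end

theory Submission
  imports Defs
begin

lemma SZv_le:
  assumes th: "0 < \<theta>" and L: "\<forall>i. 0 < L$i \<and> L$i \<le> \<bar>p$i - q$i\<bar>"
  shows "0 \<le> SZv \<theta> p q" "SZv \<theta> p q \<le> 1/(L$1*L$2*L$3)"
proof -
  define t1 where "t1 = \<bar>p$1 - q$1\<bar>"
  define t2 where "t2 = \<bar>p$2 - q$2\<bar>"
  define t3 where "t3 = \<bar>p$3 - q$3\<bar>"
  have L1: "0 < L$1" "L$1 \<le> t1" and L2: "0 < L$2" "L$2 \<le> t2" and L3: "0 < L$3" "L$3 \<le> t3"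
    using L unfolding t1_def t2_def t3_def by auto
  have tp: "0 < t1" "0 < t2" "0 < t3" using L1 L2 L3 by auto
  define s where "s = t3/(t1*t2)"
  have sp: "0 < s" using tp by (simp add: s_def)
  have inv: "(t1*t2)/t3 = 1/s" using tp by (simp add: s_def)
  have ge1: "1 \<le> s + 1/s"
  proof (cases "s \<le> 1")
    case True then have "1 \<le> 1/s" using sp by (simp add: field_simps)
    then show ?thesis using sp by linarith
  next
    case False
    have "0 < 1/s" using sp by simp
    then show ?thesis using False by linarith
  qed
  have D: "D_theta \<theta> t1 t2 t3 = (s + 1/s) powr (-\<theta>)"
    unfolding D_theta_def s_def[symmetric] inv by simp
  have Dpos: "0 < D_theta \<theta> t1 t2 t3" using D ge1 by simp
  have "1 \<le> (s + 1/s) powr \<theta>" using ge1 th by (intro ge_one_powr_ge_zero) auto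
  then have Dle: "D_theta \<theta> t1 t2 t3 \<le> 1" unfolding D powr_minus using le_imp_inverse_le[of 1 "(s + 1/s) powr \<theta>"] by simp
  have SZ: "SZv \<theta> p q = D_theta \<theta> t1 t2 t3 / (t1*t2*t3)"
    unfolding SZv_def S_Z_def t1_def t2_def t3_def by simp
  show "0 \<le> SZv \<theta> p q" unfolding SZ using Dpos tp by simp
  have "L$1*L$2*L$3 \<le> t1*t2*t3" using L1 L2 L3 by (intro mult_mono) auto
  then have "1/(t1*t2*t3) \<le> 1/(L$1*L$2*L$3)" using L1 L2 L3 by (intro divide_left_mono) auto
  moreover have "D_theta \<theta> t1 t2 t3 / (t1*t2*t3) \<le> 1/(t1*t2*t3)"
    using Dle tp by (intro divide_right_mono) auto
  ultimately show "SZv \<theta> p q \<le> 1/(L$1*L$2*L$3)" unfolding SZ by linarith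
qed

definition zsmooth :: "real \<Rightarrow> (real^3 \<Rightarrow> real^3 \<Rightarrow> complex) \<Rightarrow> real \<Rightarrow> (real \<Rightarrow> real) \<Rightarrow> bool" where
  "zsmooth \<theta> K C \<omega> \<longleftrightarrow>
       (\<forall>x x' y. off_Delta x y \<and> (\<forall>i. \<bar>x$i - x'$i\<bar> \<le> \<bar>x$i - y$i\<bar> / 2)
          \<and> x'$2 = x$2 \<and> x'$3 = x$3 \<longrightarrow>
          cmod (K x' y - K x y) \<le> C * \<omega> (\<bar>x$1 - x'$1\<bar> / \<bar>x$1 - y$1\<bar>) * SZv \<theta> x y) \<and>
       (\<forall>x x' y. off_Delta x y \<and> (\<forall>i. \<bar>x$i - x'$i\<bar> \<le> \<bar>x$i - y$i\<bar> / 2)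
          \<and> x'$1 = x$1 \<longrightarrow>
          cmod (K x' y - K x y) \<le> C * \<omega> (\<bar>x$2 - x'$2\<bar> / \<bar>x$2 - y$2\<bar> + \<bar>x$3 - x'$3\<bar> / \<bar>x$3 - y$3\<bar>) * SZv \<theta> x y) \<and>
       (\<forall>x y y'. off_Delta x y \<and> (\<forall>i. \<bar>y$i - y'$i\<bar> \<le> \<bar>x$i - y$i\<bar> / 2)
          \<and> y'$2 = y$2 \<and> y'$3 = y$3 \<longrightarrow>
          cmod (K x y' - K x y) \<le> C * \<omega> (\<bar>y$1 - y'$1\<bar> / \<bar>x$1 - y$1\<bar>) * SZv \<theta> x y) \<and>
       (\<forall>x y y'. off_Delta x y \<and> (\<forall>i. \<bar>y$i - y'$i\<bar> \<le> \<bar>x$i - y$i\<bar> / 2)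
          \<and> y'$1 = y$1 \<longrightarrow>
          cmod (K x y' - K x y) \<le> C * \<omega> (\<bar>y$2 - y'$2\<bar> / \<bar>x$2 - y$2\<bar> + \<bar>y$3 - y'$3\<bar> / \<bar>x$3 - y$3\<bar>) * SZv \<theta> x y)"

lemma zyg_unpack:
  assumes "zygmund_kernel \<theta> K"
  shows "\<exists>C>0. \<exists>\<omega>. mono_on {0..1} \<omega> \<and> (\<forall>s\<in>{0..1}. 0 \<le> \<omega> s) \<and> (\<omega> \<longlongrightarrow> 0) (at_right 0) \<and>
       (\<forall>x y. off_Delta x y \<longrightarrow> cmod (K x y) \<le> C * SZv \<theta> x y) \<and> zsmooth \<theta> K C \<omega>"
  using assms unfolding zygmund_kernel_def zsmooth_def by blast

lemma idx3: "(1::3) \<noteq> 2" "(1::3) \<noteq> 3" "(2::3) \<noteq> 3" "(2::3) \<noteq> 1" "(3::3) \<noteq> 1" "(3::3) \<noteq> 2"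
  by simp_all

lemma arg_le: fixes d s0 L D :: real shows "\<bar>d\<bar> \<le> s0/2 * L \<Longrightarrow> 0 < L \<Longrightarrow> L \<le> D \<Longrightarrow> \<bar>d\<bar>/D \<le> s0/2"
proof -
  assume a: "\<bar>d\<bar> \<le> s0/2 * L" "0 < L" "L \<le> D"
  have "\<bar>d\<bar>/D \<le> \<bar>d\<bar>/L" using a by (intro divide_left_mono) auto
  also have "\<dots> \<le> s0/2" using a by (simp add: divide_le_eq)
  finally show ?thesis .
qed

lemma term_bound:
  fixes C w W S Lp :: real
  assumes "0 < C" "0 \<le> w" "w \<le> W" "0 \<le> S" "S \<le> 1/Lp" "0 < Lp"
  shows "C * w * S \<le> C * W / Lp"
proof -
  have "C * w * S \<le> C * W * (1/Lp)" using assms by (intro mult_mono) auto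
  then show ?thesis by simp
qed

lemma chain:
  assumes sm: "zsmooth \<theta> K C \<omega>" and C: "0 < C" and th: "0 < \<theta>"
    and mono: "mono_on {0..1} \<omega>" and nonneg: "\<forall>s\<in>{0..1}. 0 \<le> \<omega> s"
    and L: "\<forall>i. 0 < L$i"
    and dist: "\<And>p q i. (\<forall>j. p$j = x$j \<or> p$j = x'$j) \<Longrightarrow> (\<forall>j. q$j = y$j \<or> q$j = y'$j) \<Longrightarrow> L$i \<le> \<bar>p$i - q$i\<bar>"
    and s0: "0 \<le> s0" "s0 \<le> 1"
    and dx: "\<forall>i. \<bar>x$i - x'$i\<bar> \<le> s0/2 * L$i" and dy: "\<forall>i. \<bar>y$i - y'$i\<bar> \<le> s0/2 * L$i"
  shows "cmod (K x' y' - K x y) \<le> 4 * C * \<omega> s0 / (L$1 * L$2 * L$3)"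
proof -
  define Lp where "Lp = L$1 * L$2 * L$3"
  have Lp: "0 < Lp" using L unfolding Lp_def by simp
  define p1 :: "real^3" where "p1 = (\<chi> i. if i = 1 then x'$i else x$i)"
  define q1 :: "real^3" where "q1 = (\<chi> i. if i = 1 then y'$i else y$i)"
  have p1c: "\<forall>j. p1$j = x$j \<or> p1$j = x'$j" unfolding p1_def by simp
  have q1c: "\<forall>j. q1$j = y$j \<or> q1$j = y'$j" unfolding q1_def by simp
  have xc: "\<forall>j. x$j = x$j \<or> x$j = x'$j" and x'c: "\<forall>j. x'$j = x$j \<or> x'$j = x'$j" by auto
  have yc: "\<forall>j. y$j = y$j \<or> y$j = y'$j" and y'c: "\<forall>j. y'$j = y$j \<or> y'$j = y'$j" by auto
  have Lb: "\<forall>i. 0 < L$i \<and> L$i \<le> \<bar>p$i - q$i\<bar>"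
    if "\<forall>j. p$j = x$j \<or> p$j = x'$j" "\<forall>j. q$j = y$j \<or> q$j = y'$j" for p q
    using L dist[OF that] by auto
  have offD: "off_Delta p q"
    if "\<forall>j. p$j = x$j \<or> p$j = x'$j" "\<forall>j. q$j = y$j \<or> q$j = y'$j" for p q
    unfolding off_Delta_def
  proof (intro allI)
    fix i show "p$i \<noteq> q$i" using Lb[OF that, rule_format, of i] by auto
  qed
  have Sb: "0 \<le> SZv \<theta> p q \<and> SZv \<theta> p q \<le> 1/Lp"
    if "\<forall>j. p$j = x$j \<or> p$j = x'$j" "\<forall>j. q$j = y$j \<or> q$j = y'$j" for p q
    using SZv_le[OF th Lb[OF that]] unfolding Lp_def by auto
  have wle: "0 \<le> \<omega> a \<and> \<omega> a \<le> \<omega> s0" if "0 \<le> a" "a \<le> s0" for a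
    using that s0 nonneg mono by (auto intro!: mono_onD[OF mono])
  have half: "\<bar>d\<bar> \<le> \<bar>p$i - q$i\<bar> / 2"
    if "\<bar>d\<bar> \<le> s0/2 * L$i" "\<forall>j. p$j = x$j \<or> p$j = x'$j" "\<forall>j. q$j = y$j \<or> q$j = y'$j" for d p q i
  proof -
    have "s0/2 * L$i \<le> 1/2 * L$i" using s0 L by (intro mult_right_mono) (auto simp: less_imp_le)
    moreover have "L$i \<le> \<bar>p$i - q$i\<bar>" using Lb[OF that(2,3), rule_format, of i] by auto
    ultimately show ?thesis using that(1) by (simp add: field_simps)
  qed
  have s1: "\<And>x x' y. off_Delta x y \<Longrightarrow> (\<forall>i. \<bar>x$i - x'$i\<bar> \<le> \<bar>x$i - y$i\<bar> / 2)
          \<Longrightarrow> x'$2 = x$2 \<Longrightarrow> x'$3 = x$3 \<Longrightarrow>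
          cmod (K x' y - K x y) \<le> C * \<omega> (\<bar>x$1 - x'$1\<bar> / \<bar>x$1 - y$1\<bar>) * SZv \<theta> x y"
   and s2: "\<And>x x' y. off_Delta x y \<Longrightarrow> (\<forall>i. \<bar>x$i - x'$i\<bar> \<le> \<bar>x$i - y$i\<bar> / 2)
          \<Longrightarrow> x'$1 = x$1 \<Longrightarrow>
          cmod (K x' y - K x y) \<le> C * \<omega> (\<bar>x$2 - x'$2\<bar> / \<bar>x$2 - y$2\<bar> + \<bar>x$3 - x'$3\<bar> / \<bar>x$3 - y$3\<bar>) * SZv \<theta> x y"
   and s3: "\<And>x y y'. off_Delta x y \<Longrightarrow> (\<forall>i. \<bar>y$i - y'$i\<bar> \<le> \<bar>x$i - y$i\<bar> / 2)
          \<Longrightarrow> y'$2 = y$2 \<Longrightarrow> y'$3 = y$3 \<Longrightarrow>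
          cmod (K x y' - K x y) \<le> C * \<omega> (\<bar>y$1 - y'$1\<bar> / \<bar>x$1 - y$1\<bar>) * SZv \<theta> x y"
   and s4: "\<And>x y y'. off_Delta x y \<Longrightarrow> (\<forall>i. \<bar>y$i - y'$i\<bar> \<le> \<bar>x$i - y$i\<bar> / 2)
          \<Longrightarrow> y'$1 = y$1 \<Longrightarrow>
          cmod (K x y' - K x y) \<le> C * \<omega> (\<bar>y$2 - y'$2\<bar> / \<bar>x$2 - y$2\<bar> + \<bar>y$3 - y'$3\<bar> / \<bar>x$3 - y$3\<bar>) * SZv \<theta> x y"
    using sm unfolding zsmooth_def by blast+
  have p1v: "p1$1 = x'$1" "p1$2 = x$2" "p1$3 = x$3" unfolding p1_def by simp_all
  have q1v: "q1$1 = y'$1" "q1$2 = y$2" "q1$3 = y$3" unfolding q1_def by simp_all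
  have stepgen: "C * \<omega> a * SZv \<theta> p q \<le> C * \<omega> s0 / Lp"
    if "0 \<le> a" "a \<le> s0" "\<forall>j. p$j = x$j \<or> p$j = x'$j" "\<forall>j. q$j = y$j \<or> q$j = y'$j" for a p q
    using term_bound[OF C _ _ _ _ Lp] wle[OF that(1,2)] Sb[OF that(3,4)] by auto
  have argb: "\<bar>d\<bar> / \<bar>p$i - q$i\<bar> \<le> s0/2"
    if "\<bar>d\<bar> \<le> s0/2 * L$i" "\<forall>j. p$j = x$j \<or> p$j = x'$j" "\<forall>j. q$j = y$j \<or> q$j = y'$j" for d p q i
    using arg_le[OF that(1)] Lb[OF that(2,3)] by auto
  have dxx: "\<bar>p$i - p'$i\<bar> \<le> s0/2 * L$i" if "\<forall>j. p$j = x$j \<or> p$j = x'$j" "\<forall>j. p'$j = x$j \<or> p'$j = x'$j" for p p' i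
  proof -
    have "0 \<le> s0/2*L$i" using s0 L by (simp add: less_imp_le)
    then show ?thesis using that(1)[rule_format, of i] that(2)[rule_format, of i] dx by (auto simp: abs_minus_commute)
  qed
  have dyy: "\<bar>q$i - q'$i\<bar> \<le> s0/2 * L$i" if "\<forall>j. q$j = y$j \<or> q$j = y'$j" "\<forall>j. q'$j = y$j \<or> q'$j = y'$j" for q q' i
  proof -
    have "0 \<le> s0/2*L$i" using s0 L by (simp add: less_imp_le)
    then show ?thesis using that(1)[rule_format, of i] that(2)[rule_format, of i] dy by (auto simp: abs_minus_commute)
  qed
  have hx: "\<forall>i. \<bar>p$i - p'$i\<bar> \<le> \<bar>p$i - q$i\<bar> / 2"
    if "\<forall>j. p$j = x$j \<or> p$j = x'$j" "\<forall>j. p'$j = x$j \<or> p'$j = x'$j" "\<forall>j. q$j = y$j \<or> q$j = y'$j" for p p' q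
    using half[OF dxx[OF that(1,2)] that(1,3)] by blast
  have hy: "\<forall>i. \<bar>q$i - q'$i\<bar> \<le> \<bar>p$i - q$i\<bar> / 2"
    if "\<forall>j. p$j = x$j \<or> p$j = x'$j" "\<forall>j. q$j = y$j \<or> q$j = y'$j" "\<forall>j. q'$j = y$j \<or> q'$j = y'$j" for p q q'
    using half[OF dyy[OF that(2,3)] that(1,2)] by blast
  have s0h: "s0/2 + s0/2 = s0" by simp
  have st1: "cmod (K p1 y - K x y) \<le> C * \<omega> s0 / Lp"
  proof -
    note e = s1[OF offD[OF xc yc] hx[OF xc p1c yc] p1v(2,3)]
    have a1: "\<bar>x$1 - p1$1\<bar> / \<bar>x$1 - y$1\<bar> \<le> s0"
      using argb[OF dxx[OF xc p1c] xc yc, of 1] s0 by linarith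
    show ?thesis using e stepgen[OF _ a1 xc yc] by simp
  qed
  have st2: "cmod (K x' y - K p1 y) \<le> C * \<omega> s0 / Lp"
  proof -
    note e = s2[OF offD[OF p1c yc] hx[OF p1c x'c yc] p1v(1)[symmetric]]
    have a: "\<bar>p1$2 - x'$2\<bar> / \<bar>p1$2 - y$2\<bar> \<le> s0/2" "\<bar>p1$3 - x'$3\<bar> / \<bar>p1$3 - y$3\<bar> \<le> s0/2"
      using argb[OF dxx[OF p1c x'c] p1c yc] by auto
    have a1: "\<bar>p1$2 - x'$2\<bar> / \<bar>p1$2 - y$2\<bar> + \<bar>p1$3 - x'$3\<bar> / \<bar>p1$3 - y$3\<bar> \<le> s0"
      using a by linarith
    show ?thesis using e stepgen[OF _ a1 p1c yc] by simp
  qed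
  have st3: "cmod (K x' q1 - K x' y) \<le> C * \<omega> s0 / Lp"
  proof -
    note e = s3[OF offD[OF x'c yc] hy[OF x'c yc q1c] q1v(2,3)]
    have a1: "\<bar>y$1 - q1$1\<bar> / \<bar>x'$1 - y$1\<bar> \<le> s0"
      using argb[OF dyy[OF yc q1c] x'c yc, of 1] s0 by linarith
    show ?thesis using e stepgen[OF _ a1 x'c yc] by simp
  qed
  have st4: "cmod (K x' y' - K x' q1) \<le> C * \<omega> s0 / Lp"
  proof -
    note e = s4[OF offD[OF x'c q1c] hy[OF x'c q1c y'c] q1v(1)[symmetric]]
    have a: "\<bar>q1$2 - y'$2\<bar> / \<bar>x'$2 - q1$2\<bar> \<le> s0/2" "\<bar>q1$3 - y'$3\<bar> / \<bar>x'$3 - q1$3\<bar> \<le> s0/2"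
      using argb[OF dyy[OF q1c y'c] x'c q1c] by auto
    have a1: "\<bar>q1$2 - y'$2\<bar> / \<bar>x'$2 - q1$2\<bar> + \<bar>q1$3 - y'$3\<bar> / \<bar>x'$3 - q1$3\<bar> \<le> s0"
      using a by linarith
    show ?thesis using e stepgen[OF _ a1 x'c q1c] by simp
  qed
  have "K x' y' - K x y = (K p1 y - K x y) + (K x' y - K p1 y) + (K x' q1 - K x' y) + (K x' y' - K x' q1)"
    by simp
  then have "cmod (K x' y' - K x y) \<le> cmod (K p1 y - K x y) + cmod (K x' y - K p1 y) + cmod (K x' q1 - K x' y) + cmod (K x' y' - K x' q1)"
    using norm_triangle_ineq[of "(K p1 y - K x y) + (K x' y - K p1 y) + (K x' q1 - K x' y)" "K x' y' - K x' q1"]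
      norm_triangle_ineq[of "(K p1 y - K x y) + (K x' y - K p1 y)" "K x' q1 - K x' y"]
      norm_triangle_ineq[of "K p1 y - K x y" "K x' y - K p1 y"] by simp
  also have "\<dots> \<le> 4 * (C * \<omega> s0 / Lp)" using st1 st2 st3 st4 by simp
  finally show ?thesis unfolding Lp_def by simp
qed


lemma re_lower:
  fixes K K0 :: complex
  assumes "cmod (K - K0) \<le> cmod K0 / 2"
  shows "cmod K0 ^ 2 / 2 \<le> Re (cnj K0 * K)"
proof -
  have e: "cnj K0 * K = cnj K0 * K0 + cnj K0 * (K - K0)" by (simp add: algebra_simps)
  have r1: "Re (cnj K0 * K0) = cmod K0 ^ 2" using cmod_power2[of K0] by (simp add: power2_eq_square)
  have "\<bar>Re (cnj K0 * (K - K0))\<bar> \<le> cmod (cnj K0 * (K - K0))" by (rule abs_Re_le_cmod)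
  also have "\<dots> = cmod K0 * cmod (K - K0)" by (simp add: norm_mult)
  also have "\<dots> \<le> cmod K0 * (cmod K0 / 2)" using assms by (intro mult_left_mono) auto
  finally have "\<bar>Re (cnj K0 * (K - K0))\<bar> \<le> cmod K0 ^ 2 / 2" by (simp add: power2_eq_square)
  moreover have "Re (cnj K0 * K) = Re (cnj K0 * K0) + Re (cnj K0 * (K - K0))"
    using e by (metis plus_complex.sel(1))
  ultimately show ?thesis using r1 by linarith
qed

lemma main_est:
  fixes K :: "real^3 \<Rightarrow> real^3 \<Rightarrow> complex" and b :: "real^3 \<Rightarrow> real" and K0 :: complex
  assumes R: "compact R" and P: "compact P"
    and contK: "continuous_on (P \<times> R) (\<lambda>z. K (fst z) (snd z))"
    and close: "\<And>x y. x \<in> P \<Longrightarrow> y \<in> R \<Longrightarrow> cmod (K x y - K0) \<le> cmod K0 / 2"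
    and K0: "K0 \<noteq> 0"
    and bm: "b \<in> borel_measurable lborel"
    and bR: "set_integrable lborel R b" and bP: "set_integrable lborel P b"
    and sg: "\<sigma> = 1 \<or> \<sigma> = -1"
    and E_def: "E = {y \<in> R. 0 \<le> \<sigma>*(b y - \<beta>)}" and F_def: "F = {x \<in> P. \<sigma>*(b x - \<beta>) \<le> 0}"
  shows "cmod K0 / 2 * measure lborel F * (\<integral>y. indicator R y * max 0 (\<sigma>*(b y - \<beta>)) \<partial>lborel)
           \<le> cmod (bil K b R P (indicator E) (indicator F))"
proof -
  have Rb[measurable]: "R \<in> sets lborel" using R by (simp add: compact_imp_closed borel_closed)
  have Pb[measurable]: "P \<in> sets lborel" using P by (simp add: compact_imp_closed borel_closed)
  have bm'[measurable]: "b \<in> borel_measurable lborel" by fact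
  have Em[measurable]: "E \<in> sets lborel" unfolding E_def by measurable
  have Fm[measurable]: "F \<in> sets lborel" unfolding F_def by measurable
  have ER: "E \<subseteq> R" "F \<subseteq> P" unfolding E_def F_def by auto
  have Rfin: "emeasure lborel R < \<infinity>" using emeasure_compact_finite[OF R] .
  have Pfin: "emeasure lborel P < \<infinity>" using emeasure_compact_finite[OF P] .
  have Ffin: "emeasure lborel F < \<infinity>" using Pfin emeasure_mono[OF ER(2) Pb] by simp
  define k where "k = 3/2 * cmod K0"
  have k0: "0 \<le> k" unfolding k_def by simp
  have Kb: "cmod (K x y) \<le> k" if "x \<in> P" "y \<in> R" for x y
  proof -
    have "cmod (K x y) \<le> cmod K0 + cmod (K x y - K0)" by (metis norm_triangle_sub)
    then show ?thesis using close[OF that] unfolding k_def by simp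
  qed
  define H where "H = (\<lambda>x y. complex_of_real (b x - b y) * K x y * indicator E y * indicator F x)"
  have bil_eq: "bil K b R P (indicator E) (indicator F) = (\<integral>x. indicator P x *\<^sub>R (\<integral>y. indicator R y *\<^sub>R H x y \<partial>lborel) \<partial>lborel)"
    unfolding bil_def H_def set_lebesgue_integral_def ..
  define Kc where "Kc = (\<lambda>z::((real^3) \<times> (real^3)). indicator (P \<times> R) z *\<^sub>R K (fst z) (snd z))"
  have Kcb: "Kc \<in> borel_measurable borel"
    unfolding Kc_def
    by (rule borel_measurable_continuous_on_indicator[OF _ contK])
       (simp add: compact_imp_closed borel_closed closed_Times P R)
  have Kcm[measurable]: "Kc \<in> borel_measurable (lborel \<Otimes>\<^sub>M lborel)"
  proof -
    have "sets (lborel \<Otimes>\<^sub>M lborel) = sets (borel \<Otimes>\<^sub>M borel :: ((real^3) \<times> (real^3)) measure)"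
      by (rule sets_pair_measure_cong) simp_all
    also have "\<dots> = sets borel" by (metis borel_prod)
    finally have S: "sets (lborel \<Otimes>\<^sub>M lborel) = sets (borel :: ((real^3) \<times> (real^3)) measure)" .
    show ?thesis using Kcb unfolding measurable_cong_sets[OF S refl] .
  qed
  have Hjoint[measurable]: "(\<lambda>z. indicator R (snd z) *\<^sub>R H (fst z) (snd z)) \<in> borel_measurable (lborel \<Otimes>\<^sub>M lborel)"
  proof -
    have eq: "(\<lambda>z. indicator R (snd z) *\<^sub>R H (fst z) (snd z)) =
       (\<lambda>z. Kc z * (complex_of_real (b (fst z) - b (snd z)) * indicator E (snd z) * indicator F (fst z)))"
      using ER by (auto simp: fun_eq_iff H_def Kc_def indicator_def)
    show ?thesis unfolding eq by measurable
  qed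
  have Hjoint'[measurable]: "case_prod (\<lambda>x y. indicator R y *\<^sub>R H x y) \<in> borel_measurable (lborel \<Otimes>\<^sub>M lborel)"
    using Hjoint by (simp add: case_prod_beta')
  have bRi: "integrable lborel (\<lambda>y. indicator R y * b y)"
    using bR unfolding set_integrable_def by simp
  have bRa: "integrable lborel (\<lambda>y. indicator R y * \<bar>b y\<bar>)"
    using set_integrable_abs[OF bR] unfolding set_integrable_def by simp
  have bPa: "integrable lborel (\<lambda>y. indicator P y * \<bar>b y\<bar>)"
    using set_integrable_abs[OF bP] unfolding set_integrable_def by simp
  have iR: "integrable lborel (indicator R :: real^3 \<Rightarrow> real)" using Rb Rfin by simp
  have iP: "integrable lborel (indicator P :: real^3 \<Rightarrow> real)" using Pb Pfin by simp
  have iF: "integrable lborel (indicator F :: real^3 \<Rightarrow> real)" using Fm Ffin by simp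
  have Hb: "norm (indicator R y *\<^sub>R H x y) \<le> k * (indicator R y * \<bar>b x\<bar> + indicator R y * \<bar>b y\<bar>)" for x y
  proof (cases "x \<in> F \<and> y \<in> E")
    case True
    then have xy: "x \<in> P" "y \<in> R" using ER by auto
    have "norm (indicator R y *\<^sub>R H x y) = \<bar>b x - b y\<bar> * cmod (K x y)"
      using True xy by (simp add: H_def norm_mult of_real_diff[symmetric] del: of_real_diff)
    also have "\<dots> \<le> (\<bar>b x\<bar> + \<bar>b y\<bar>) * k"
      using Kb[OF xy] by (intro mult_mono) auto
    finally show ?thesis using xy by (simp add: algebra_simps)
  next
    case False
    then have "H x y = 0" by (auto simp: H_def)
    then show ?thesis using k0 by (simp add: indicator_def)
  qed
  have Hint: "integrable lborel (\<lambda>y. indicator R y *\<^sub>R H x y)" for x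
  proof (rule Bochner_Integration.integrable_bound)
    show "AE y in lborel. norm (indicator R y *\<^sub>R H x y) \<le> norm (k * (indicator R y * \<bar>b x\<bar> + indicator R y * \<bar>b y\<bar>))"
      by (intro AE_I2, rule order_trans[OF Hb]) simp
    show "integrable lborel (\<lambda>y. k * (indicator R y * \<bar>b x\<bar> + indicator R y * \<bar>b y\<bar>))"
      using iR bRa by (intro integrable_mult_right integrable_add integrable_mult_left) auto
    show "(\<lambda>y. indicator R y *\<^sub>R H x y) \<in> borel_measurable lborel"
      using measurable_Pair2[OF Hjoint', of x] by simp
  qed
  define J where "J x = (\<integral>y. indicator R y *\<^sub>R H x y \<partial>lborel)" for x
  have Jm[measurable]: "J \<in> borel_measurable lborel"
    unfolding J_def by (rule lborel.borel_measurable_lebesgue_integral[OF Hjoint'])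
  define IB where "IB = (\<integral>y. indicator R y * \<bar>b y\<bar> \<partial>lborel)"
  have Jb: "norm (J x) \<le> k * (\<bar>b x\<bar> * measure lborel R + IB)" for x
  proof -
    have "norm (J x) \<le> (\<integral>y. norm (indicator R y *\<^sub>R H x y) \<partial>lborel)"
      unfolding J_def by (rule integral_norm_bound)
    also have "\<dots> \<le> (\<integral>y. k * (indicator R y * \<bar>b x\<bar> + indicator R y * \<bar>b y\<bar>) \<partial>lborel)"
      using integrable_norm[OF Hint[of x]] iR bRa Hb by (intro integral_mono) auto
    also have "\<dots> = k * (\<bar>b x\<bar> * measure lborel R + IB)"
      using iR bRa by (simp add: IB_def integral_add)
    finally show ?thesis .
  qed
  have Jint: "integrable lborel (\<lambda>x. indicator P x *\<^sub>R J x)"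
  proof (rule Bochner_Integration.integrable_bound)
    show "integrable lborel (\<lambda>x. k * (measure lborel R * (indicator P x * \<bar>b x\<bar>) + IB * indicator P x))"
      using iP bPa by (intro integrable_mult_right integrable_add) auto
    show "(\<lambda>x. indicator P x *\<^sub>R J x) \<in> borel_measurable lborel" by measurable
    show "AE x in lborel. norm (indicator P x *\<^sub>R J x) \<le> norm (k * (measure lborel R * (indicator P x * \<bar>b x\<bar>) + IB * indicator P x))"
    proof (intro AE_I2)
      fix x
      have IB0: "0 \<le> IB" unfolding IB_def by (intro integral_nonneg_AE) (auto simp: indicator_def)
      have "norm (indicator P x *\<^sub>R J x) \<le> indicator P x * (k * (\<bar>b x\<bar> * measure lborel R + IB))"
        using Jb[of x] by (simp add: indicator_def)
      also have "\<dots> = k * (measure lborel R * (indicator P x * \<bar>b x\<bar>) + IB * indicator P x)"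
        by (simp add: algebra_simps)
      also have "\<dots> \<le> norm (k * (measure lborel R * (indicator P x * \<bar>b x\<bar>) + IB * indicator P x))"
        by simp
      finally show "norm (indicator P x *\<^sub>R J x) \<le> norm (k * (measure lborel R * (indicator P x * \<bar>b x\<bar>) + IB * indicator P x))" .
    qed
  qed
  define g where "g y = indicator R y * max 0 (\<sigma>*(b y - \<beta>))" for y
  have gi: "integrable lborel g"
  proof (rule Bochner_Integration.integrable_bound)
    show "integrable lborel (\<lambda>y. indicator R y * \<bar>b y\<bar> + \<bar>\<beta>\<bar> * indicator R y)"
      using Bochner_Integration.integrable_add[OF bRa integrable_mult_right[OF iR, of "\<bar>\<beta>\<bar>"]] .
    show "g \<in> borel_measurable lborel" unfolding g_def by measurable
    show "AE y in lborel. norm (g y) \<le> norm (indicator R y * \<bar>b y\<bar> + \<bar>\<beta>\<bar> * indicator R y)"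
    proof (intro AE_I2)
      fix y
      have "\<bar>\<sigma>*(b y - \<beta>)\<bar> \<le> \<bar>b y\<bar> + \<bar>\<beta>\<bar>" using sg by auto
      then show "norm (g y) \<le> norm (indicator R y * \<bar>b y\<bar> + \<bar>\<beta>\<bar> * indicator R y)"
        by (auto simp: g_def indicator_def)
    qed
  qed
  define G where "G = integral\<^sup>L lborel g"
  have nK0: "0 < cmod K0" using K0 by simp
  define c where "c = complex_of_real (-\<sigma>) * cnj K0 / complex_of_real (cmod K0)"
  have c1: "cmod c = 1" using sg nK0 by (auto simp: c_def norm_mult norm_divide)
  have pt: "cmod K0 / 2 * indicator F x * g y \<le> Re (c * (indicator R y *\<^sub>R H x y))" for x y
  proof (cases "x \<in> F \<and> y \<in> E")
    case True
    then have xy: "x \<in> P" "y \<in> R" using ER by auto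
    have sx: "\<sigma>*(b x - \<beta>) \<le> 0" using True unfolding F_def by auto
    have sy: "0 \<le> \<sigma>*(b y - \<beta>)" using True unfolding E_def by auto
    define r where "r = \<sigma>*(b y - b x) / cmod K0"
    have eq: "c * (indicator R y *\<^sub>R H x y) = complex_of_real r * (cnj K0 * K x y)"
      using True xy nK0 by (simp add: c_def H_def r_def field_simps)
    have r0: "\<sigma>*(b y - \<beta>) / cmod K0 \<le> r"
      unfolding r_def using sx nK0 by (intro divide_right_mono) (auto simp: algebra_simps)
    have q: "cmod K0 ^ 2 / 2 \<le> Re (cnj K0 * K x y)" by (rule re_lower[OF close[OF xy]])
    have "cmod K0 / 2 * indicator F x * g y = \<sigma>*(b y - \<beta>) / cmod K0 * (cmod K0 ^ 2 / 2)"
      using True xy sy nK0 by (simp add: g_def power2_eq_square)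
    also have "\<dots> \<le> r * Re (cnj K0 * K x y)"
    proof (rule mult_mono[OF r0 q])
      have "0 \<le> \<sigma>*(b y - \<beta>) / cmod K0" using sy nK0 by simp
      then show "0 \<le> r" using r0 by linarith
      show "0 \<le> cmod K0 ^ 2 / 2" by simp
    qed
    also have "\<dots> = Re (c * (indicator R y *\<^sub>R H x y))" unfolding eq by simp
    finally show ?thesis .
  next
    case False
    then have H0: "H x y = 0" by (auto simp: H_def)
    have "indicator F x * g y \<le> 0"
    proof (cases "x \<in> F")
      case True
      then have "y \<notin> E" using False by auto
      then show ?thesis using True unfolding g_def E_def by (auto simp: indicator_def)
    qed simp
    then have "cmod K0 / 2 * indicator F x * g y \<le> 0"
      by (metis mult.assoc mult_nonneg_nonpos nK0 less_imp_le half_gt_zero)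
    then show ?thesis using H0 by simp
  qed
  have inner: "cmod K0 / 2 * G * indicator F x \<le> Re (c * J x)" for x
  proof -
    have ci: "integrable lborel (\<lambda>y. c * (indicator R y *\<^sub>R H x y))"
      using Hint[of x] by (rule integrable_mult_right)
    have "Re (c * J x) = Re (\<integral>y. c * (indicator R y *\<^sub>R H x y) \<partial>lborel)"
      unfolding J_def by (simp only: integral_mult_right_zero)
    also have "\<dots> = (\<integral>y. Re (c * (indicator R y *\<^sub>R H x y)) \<partial>lborel)"
      using integral_Re[OF ci] by simp
    finally have e: "Re (c * J x) = (\<integral>y. Re (c * (indicator R y *\<^sub>R H x y)) \<partial>lborel)" .
    have "cmod K0 / 2 * G * indicator F x = (\<integral>y. cmod K0 / 2 * indicator F x * g y \<partial>lborel)"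
      by (simp add: G_def)
    also have "\<dots> \<le> (\<integral>y. Re (c * (indicator R y *\<^sub>R H x y)) \<partial>lborel)"
    proof (rule integral_mono)
      show "integrable lborel (\<lambda>y. cmod K0 / 2 * indicator F x * g y)"
        using gi by (rule integrable_mult_right)
      show "integrable lborel (\<lambda>y. Re (c * (indicator R y *\<^sub>R H x y)))"
        by (rule integrable_Re[OF ci])
      show "\<And>y. cmod K0 / 2 * indicator F x * g y \<le> Re (c * (indicator R y *\<^sub>R H x y))"
        by (rule pt)
    qed
    finally show ?thesis using e by simp
  qed
  have ciP: "integrable lborel (\<lambda>x. c * (indicator P x *\<^sub>R J x))"
    using Jint by (rule integrable_mult_right)
  have "cmod K0 / 2 * measure lborel F * G = (\<integral>x. cmod K0 / 2 * G * indicator F x \<partial>lborel)"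
    using Fm by simp
  also have "\<dots> \<le> (\<integral>x. Re (c * (indicator P x *\<^sub>R J x)) \<partial>lborel)"
  proof (intro integral_mono)
    show "integrable lborel (\<lambda>x. cmod K0 / 2 * G * indicator F x)" using iF by simp
    show "integrable lborel (\<lambda>x. Re (c * (indicator P x *\<^sub>R J x)))" by (rule integrable_Re[OF ciP])
    fix x
    show "cmod K0 / 2 * G * indicator F x \<le> Re (c * (indicator P x *\<^sub>R J x))"
    proof (cases "x \<in> P")
      case True then show ?thesis using inner[of x] by simp
    next
      case False then have "x \<notin> F" using ER by auto
      then show ?thesis using False by simp
    qed
  qed
  also have "\<dots> = Re (\<integral>x. c * (indicator P x *\<^sub>R J x) \<partial>lborel)"
    using integral_Re[OF ciP] by simp
  also have "\<dots> = Re (c * bil K b R P (indicator E) (indicator F))"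
  proof -
    have bil_J: "bil K b R P (indicator E) (indicator F) = (\<integral>x. indicator P x *\<^sub>R J x \<partial>lborel)"
      unfolding bil_eq J_def ..
    show ?thesis unfolding bil_J integral_mult_right_zero ..
  qed
  also have "\<dots> \<le> cmod (c * bil K b R P (indicator E) (indicator F))" by (rule complex_Re_le_cmod)
  also have "\<dots> = cmod (bil K b R P (indicator E) (indicator F))" by (simp add: norm_mult c1)
  finally show ?thesis unfolding G_def g_def .
qed


lemma locint_meas:
  assumes "locally_integrable b"
  shows "b \<in> borel_measurable lborel"
proof (rule borel_measurable_LIMSEQ_real)
  fix n :: nat
  have "set_integrable lborel (cball 0 (real n)) b"
    using assms unfolding locally_integrable_def by simp
  then have "integrable lborel (\<lambda>x. indicator (cball 0 (real n)) x *\<^sub>R b x)"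
    unfolding set_integrable_def .
  then show "(\<lambda>x. indicator (cball 0 (real n)) x * b x) \<in> borel_measurable lborel"
    by (simp add: borel_measurable_integrable)
next
  fix x :: "real^3"
  have "eventually (\<lambda>n. indicator (cball 0 (real n)) x * b x = b x) sequentially"
  proof (rule eventually_sequentiallyI[of "nat \<lceil>norm x\<rceil>"])
    fix n assume "nat \<lceil>norm x\<rceil> \<le> n"
    then have "norm x \<le> real n" by linarith
    then show "indicator (cball 0 (real n)) x * b x = b x" by (simp add: indicator_def)
  qed
  then show "(\<lambda>n. indicator (cball 0 (real n)) x * b x) \<longlonglongrightarrow> b x"
    by (rule tendsto_eventually)
qed

lemma osc_split:
  fixes b :: "real^3 \<Rightarrow> real"
  assumes bR: "set_integrable lborel R b" and Rm: "R \<in> sets lborel" and Rfin: "emeasure lborel R < \<infinity>"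
    and Rpos: "0 < measure lborel R" and bmeas[measurable]: "b \<in> borel_measurable lborel" and sg: "\<sigma> = 1 \<or> \<sigma> = -1"
  shows "set_lebesgue_integral lborel R (\<lambda>x. \<bar>b x - avg b R\<bar>)
         = 2 * (\<integral>y. indicator R y * max 0 (\<sigma>*(b y - avg b R)) \<partial>lborel)"
proof -
  define \<beta> where "\<beta> = avg b R"
  have Rm'[measurable]: "R \<in> sets lborel" by fact
  have bRi: "integrable lborel (\<lambda>y. indicator R y * b y)"
    using bR unfolding set_integrable_def by simp
  have iR: "integrable lborel (indicator R :: real^3 \<Rightarrow> real)" using Rm Rfin by simp
  have f: "integrable lborel (\<lambda>y. indicator R y * b y - \<beta> * indicator R y)"
    using bRi iR by simp
  have int0: "(\<integral>y. indicator R y * b y - \<beta> * indicator R y \<partial>lborel) = 0"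
  proof -
    have "(\<integral>y. indicator R y * b y - \<beta> * indicator R y \<partial>lborel) = (\<integral>y. indicator R y * b y \<partial>lborel) - \<beta> * measure lborel R"
      using bRi iR Rm by (simp add: Bochner_Integration.integral_diff)
    also have "\<dots> = 0" using Rpos
      by (simp add: \<beta>_def avg_def set_lebesgue_integral_def)
    finally show ?thesis .
  qed
  define fp where "fp y = indicator R y * max 0 (\<sigma>*(b y - \<beta>))" for y
  define fm where "fm y = indicator R y * max 0 (-\<sigma>*(b y - \<beta>))" for y
  have fpi: "integrable lborel fp"
  proof (rule Bochner_Integration.integrable_bound)
    show "integrable lborel (\<lambda>y. \<bar>indicator R y * b y - \<beta> * indicator R y\<bar>)" using f by simp
    have "fp = (\<lambda>y. max 0 (\<sigma>*(indicator R y * b y - \<beta> * indicator R y)))"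
      by (auto simp: fun_eq_iff fp_def indicator_def)
    show "fp \<in> borel_measurable lborel" unfolding fp_def by measurable
    show "AE y in lborel. norm (fp y) \<le> norm (\<bar>indicator R y * b y - \<beta> * indicator R y\<bar>)"
      using sg by (intro AE_I2) (auto simp: fp_def indicator_def)
  qed
  have fmi: "integrable lborel fm"
  proof (rule Bochner_Integration.integrable_bound)
    show "integrable lborel (\<lambda>y. \<bar>indicator R y * b y - \<beta> * indicator R y\<bar>)" using f by simp
    have "fm = (\<lambda>y. max 0 (-\<sigma>*(indicator R y * b y - \<beta> * indicator R y)))"
      by (auto simp: fun_eq_iff fm_def indicator_def)
    show "fm \<in> borel_measurable lborel" unfolding fm_def by measurable
    show "AE y in lborel. norm (fm y) \<le> norm (\<bar>indicator R y * b y - \<beta> * indicator R y\<bar>)"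
      using sg by (intro AE_I2) (auto simp: fm_def indicator_def)
  qed
  have e1: "(\<lambda>y. \<sigma> * (indicator R y * b y - \<beta> * indicator R y)) = (\<lambda>y. fp y - fm y)"
    using sg by (auto simp: fun_eq_iff fp_def fm_def indicator_def)
  have e2: "(\<lambda>y. indicator R y *\<^sub>R \<bar>b y - \<beta>\<bar>) = (\<lambda>y. fp y + fm y)"
    using sg by (auto simp: fun_eq_iff fp_def fm_def indicator_def)
  have "0 = \<sigma> * (\<integral>y. indicator R y * b y - \<beta> * indicator R y \<partial>lborel)" using int0 by simp
  also have "\<dots> = (\<integral>y. fp y - fm y \<partial>lborel)" unfolding e1[symmetric] by simp
  also have "\<dots> = integral\<^sup>L lborel fp - integral\<^sup>L lborel fm"
    using fpi fmi by (rule Bochner_Integration.integral_diff)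
  finally have "integral\<^sup>L lborel fm = integral\<^sup>L lborel fp" by simp
  moreover have "set_lebesgue_integral lborel R (\<lambda>x. \<bar>b x - \<beta>\<bar>) = integral\<^sup>L lborel fp + integral\<^sup>L lborel fm"
    unfolding set_lebesgue_integral_def e2 using fpi fmi by (rule Bochner_Integration.integral_add)
  ultimately show ?thesis unfolding \<beta>_def[symmetric] fp_def by simp
qed


lemma setdist_iv: "(a::real) \<le> b \<Longrightarrow> c \<le> d \<Longrightarrow> b \<le> c \<Longrightarrow> setdist {a..b} {c..d} = c - b"
proof -
  assume h: "a \<le> b" "c \<le> d" "b \<le> c"
  have "setdist {a..b} {c..d} = dist b c"
    by (rule setdist_unique) (use h in \<open>auto simp: dist_real_def\<close>)
  then show ?thesis using h by (simp add: dist_real_def)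
qed

lemma prod3_less:
  fixes a b c a' b' c' :: real
  assumes "0 < a" "a < a'" "0 < b" "b \<le> b'" "0 < c" "c \<le> c'"
  shows "a * b * c < a' * b' * c'"
proof -
  have "a * b * c < a' * b * c" using assms by (intro mult_strict_right_mono) auto
  also have "\<dots> \<le> a' * b' * c" using assms by (intro mult_right_mono mult_left_mono) auto
  also have "\<dots> \<le> a' * b' * c'" using assms by (intro mult_left_mono) auto
  finally show ?thesis .
qed

lemma coord_setdist:
  fixes a b x0 l t :: real
  assumes "b = a + l" "0 < l" "t = \<bar>x0 - a\<bar>" "2*l \<le> t"
  shows "setdist {a..b} {x0..x0+l} = t - l"
proof (cases "a \<le> x0")
  case True
  then have "setdist {a..b} {x0..x0+l} = x0 - b" using assms by (intro setdist_iv) auto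
  then show ?thesis using assms True by auto
next
  case False
  then have "setdist {x0..x0+l} {a..b} = a - (x0 + l)" using assms by (intro setdist_iv) auto
  then show ?thesis using assms False by (auto simp: setdist_sym)
qed

lemma coord_dist:
  fixes a b x0 l t p q :: real
  assumes "b = a + l" "t = \<bar>x0 - a\<bar>" "x0 \<le> p" "p \<le> x0 + l" "a \<le> q" "q \<le> b"
  shows "t - l \<le> \<bar>p - q\<bar>"
proof (cases "a \<le> x0")
  case True then show ?thesis using assms by auto
next
  case False then show ?thesis using assms by auto
qed

lemma prod_UNIV_3: "prod f (UNIV::3 set) = f 1 * f 2 * f 3"
  unfolding UNIV_3 by (simp add: mult.assoc)

lemma in_box_combo:
  fixes p x x' lo hi :: "real^3"
  assumes "\<forall>j. p$j = x$j \<or> p$j = x'$j" "x \<in> cbox lo hi" "x' \<in> cbox lo hi"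
  shows "p \<in> cbox lo hi"
  using assms unfolding mem_box_cart by metis

lemma geometry:
  fixes K :: "real^3 \<Rightarrow> real^3 \<Rightarrow> complex"
  assumes th: "0 < \<theta>" and Ck: "0 < Ck" and mono: "mono_on {0..1} \<omega>" and nonneg: "\<forall>s\<in>{0..1}. 0 \<le> \<omega> s"
    and size: "\<forall>x y. off_Delta x y \<longrightarrow> cmod (K x y) \<le> Ck * SZv \<theta> x y"
    and sm: "zsmooth \<theta> K Ck \<omega>"
    and smallw: "\<And>\<epsilon>. 0 < \<epsilon> \<Longrightarrow> \<exists>\<eta>>0. \<forall>s. 0 < s \<and> s < \<eta> \<longrightarrow> \<omega> s < \<epsilon>"
    and c: "0 < c"
    and nd: "\<And>y \<delta>1 \<delta>2. 0 < \<delta>1 \<Longrightarrow> 0 < \<delta>2 \<Longrightarrow> \<exists>x. \<delta>1 < \<bar>x$1 - y$1\<bar> \<and> \<delta>2 < \<bar>x$2 - y$2\<bar> \<and>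
            \<delta>1 * \<delta>2 < \<bar>x$3 - y$3\<bar> \<and> c * \<delta>1 powr -2 * \<delta>2 powr -2 \<le> cmod (K x y)"
    and A: "4 \<le> A" and ws0: "\<omega> (4/A) < c/(64*Ck)" and M: "Ck/c \<le> M" "1 \<le> M"
    and R: "zyg_rect R"
  obtains P K0 where "adm_pair (M*A^2) R P" "compact P" "compact R" "measure lborel P = measure lborel R"
     "0 < measure lborel R"
     "continuous_on (P \<times> R) (\<lambda>z. K (fst z) (snd z))"
     "\<And>x y. x \<in> P \<Longrightarrow> y \<in> R \<Longrightarrow> cmod (K x y - K0) \<le> cmod K0 / 2" "K0 \<noteq> 0"
     "c / (A^4 * measure lborel R) \<le> cmod K0"
proof -
  obtain a b where Rab: "R = cbox a b" and ab: "\<forall>i. a$i < b$i" and l3: "b$3 - a$3 = (b$1 - a$1) * (b$2 - a$2)"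
    using R unfolding zyg_rect_def by blast
  define l where "l = b - a"
  have lpos: "\<forall>i. 0 < l$i" using ab by (simp add: l_def)
  have l3': "l$3 = l$1 * l$2" using l3 by (simp add: l_def)
  have A0: "0 < A" using A by simp
  obtain x0 where t1: "A * l$1 < \<bar>x0$1 - a$1\<bar>" and t2: "A * l$2 < \<bar>x0$2 - a$2\<bar>"
      and t3: "(A * l$1) * (A * l$2) < \<bar>x0$3 - a$3\<bar>"
      and Kx0: "c * (A * l$1) powr -2 * (A * l$2) powr -2 \<le> cmod (K x0 a)"
    using nd[of "A * l$1" "A * l$2" a] lpos A0 by auto
  define K0 where "K0 = K x0 a"
  define t :: "real^3" where "t = (\<chi> i. \<bar>x0$i - a$i\<bar>)"
  have tv: "t$1 = \<bar>x0$1 - a$1\<bar>" "t$2 = \<bar>x0$2 - a$2\<bar>" "t$3 = \<bar>x0$3 - a$3\<bar>" by (simp_all add: t_def)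
  have measR: "measure lborel R = l$1 * l$2 * l$3"
  proof -
    have "a \<in> cbox a b" using ab by (simp add: mem_box_cart less_imp_le)
    then have "cbox a b \<noteq> {}" by blast
    then have "measure lborel R = (b$1 - a$1) * (b$2 - a$2) * (b$3 - a$3)"
      unfolding Rab using content_cbox_cart[of a b] prod_UNIV_3[of "\<lambda>i. b$i - a$i"] by simp
    then show ?thesis by (simp add: l_def)
  qed
  have measR2: "measure lborel R = l$1^2 * l$2^2" using measR l3' by (simp add: power2_eq_square)
  have Rpos: "0 < measure lborel R" using measR lpos by simp
  have lowK: "c / (A^4 * measure lborel R) \<le> cmod K0"
  proof -
    have e: "(A * l$1) powr -2 = 1 / (A * l$1)^2" "(A * l$2) powr -2 = 1 / (A * l$2)^2"
    proof -
      have p: "0 < A * l$1" "0 < A * l$2" using lpos A0 by simp_all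
      show "(A * l$1) powr -2 = 1 / (A * l$1)^2" "(A * l$2) powr -2 = 1 / (A * l$2)^2"
        using p by (simp_all add: powr_minus powr_numeral divide_inverse)
    qed
    have "c / (A^4 * measure lborel R) = c * (A * l$1) powr -2 * (A * l$2) powr -2"
      unfolding e measR2 by (simp add: power_mult_distrib)
    then show ?thesis using Kx0 unfolding K0_def by simp
  qed
  have Al: "0 < A * l$1" "0 < A * l$2" using lpos A0 by simp_all
  have tpos: "\<forall>i. 0 < t$i"
  proof -
    have "0 < (A * l$1) * (A * l$2)" using Al by simp
    then show ?thesis unfolding forall_3 tv using t1 t2 t3 Al by linarith
  qed
  have offx0: "off_Delta x0 a" unfolding off_Delta_def
  proof
    fix i show "x0$i \<noteq> a$i" using tpos[rule_format, of i] by (auto simp: t_def)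
  qed
  define T where "T = t$1 * t$2 * t$3"
  have Tpos: "0 < T" using tpos by (simp add: T_def)
  have upK: "cmod K0 \<le> Ck / T"
  proof -
    have "cmod K0 \<le> Ck * SZv \<theta> x0 a" using size offx0 unfolding K0_def by blast
    also have "\<dots> \<le> Ck * (1 / T)"
      using SZv_le(2)[OF th, of t x0 a] tpos Ck unfolding T_def by (intro mult_left_mono) (auto simp: t_def)
    finally show ?thesis by simp
  qed
  have prodle: "T \<le> M * ((A * l$1) * (A * l$2) * ((A * l$1) * (A * l$2)))"
  proof -
    have R4: "0 < A^4 * measure lborel R" using A0 Rpos by simp
    have "c / (A^4 * measure lborel R) \<le> Ck / T" using lowK upK by linarith
    then have "c * T \<le> Ck * (A^4 * measure lborel R)" using R4 Tpos by (simp add: divide_simps)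
    then have "T \<le> (Ck / c) * (A^4 * measure lborel R)" using c by (simp add: field_simps)
    also have "\<dots> \<le> M * (A^4 * measure lborel R)" using M R4 by (intro mult_right_mono) auto
    also have "A^4 * measure lborel R = (A * l$1) * (A * l$2) * ((A * l$1) * (A * l$2))"
      unfolding measR2 by (simp add: power2_eq_square power4_eq_xxxx)
    finally show ?thesis .
  qed
  have MAl: "0 < M * A * l$1" "0 < M * A * l$2" "0 < M * A^2 * l$3" using M A0 lpos by simp_all
  have tb1: "t$1 \<le> M * A * l$1"
  proof (rule ccontr)
    assume "\<not> ?thesis"
    then have "(M * A * l$1) * (A * l$2) * ((A * l$1) * (A * l$2)) < T"
      unfolding T_def using M Al MAl lpos t2 t3 tv by (intro prod3_less) auto
    then show False using prodle by (simp add: algebra_simps)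
  qed
  have tb2: "t$2 \<le> M * A * l$2"
  proof (rule ccontr)
    assume "\<not> ?thesis"
    then have "(A * l$1) * (M * A * l$2) * ((A * l$1) * (A * l$2)) < T"
      unfolding T_def using M Al MAl lpos t1 t3 tv by (intro prod3_less) auto
    then show False using prodle by (simp add: algebra_simps)
  qed
  have tb3: "t$3 \<le> M * A^2 * l$3"
  proof (rule ccontr)
    assume "\<not> ?thesis"
    then have "(A * l$1) * (A * l$2) * (M * A^2 * l$3) < T"
      unfolding T_def using M Al MAl lpos t1 t2 tv by (intro prod3_less) auto
    then show False using prodle l3' by (simp add: algebra_simps power2_eq_square)
  qed
  define C0 where "C0 = M * A^2"
  have A2: "4 \<le> A^2"
  proof -
    have "A * 1 \<le> A * A" using A by (intro mult_left_mono) auto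
    then show ?thesis using A unfolding power2_eq_square by linarith
  qed
  define Lv :: "real^3" where "Lv = vector [A*l$1/2, A*l$2/2, A^2*l$3/2]"
  have Lvv: "Lv$1 = A*l$1/2" "Lv$2 = A*l$2/2" "Lv$3 = A^2*l$3/2" by (simp_all add: Lv_def)
  have coordf: "\<And>i. 0 < Lv$i \<and> Lv$i \<le> t$i - l$i \<and> l$i \<le> Lv$i \<and> 2 * l$i \<le> t$i \<and> t$i \<le> C0 * l$i"
  proof -
    have l1: "0 < l$1" and l2: "0 < l$2" and l3p: "0 < l$3" using lpos by auto
    have a1: "4 * l$1 \<le> A * l$1" using A l1 by (intro mult_right_mono) auto
    have a2: "4 * l$2 \<le> A * l$2" using A l2 by (intro mult_right_mono) auto
    have a3: "4 * l$3 \<le> A^2 * l$3" using A2 l3p by (intro mult_right_mono) auto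
    have AA: "A \<le> A^2" using A by (simp add: power2_eq_square)
    have m1: "M * A * l$1 \<le> C0 * l$1" unfolding C0_def using AA M l1 by (intro mult_right_mono mult_left_mono) auto
    have m2: "M * A * l$2 \<le> C0 * l$2" unfolding C0_def using AA M l2 by (intro mult_right_mono mult_left_mono) auto
    have t3': "A^2 * l$3 < t$3" using t3 tv l3' by (simp add: power2_eq_square algebra_simps)
    have "0 < Lv$i \<and> Lv$i \<le> t$i - l$i \<and> l$i \<le> Lv$i \<and> 2 * l$i \<le> t$i \<and> t$i \<le> C0 * l$i" for i
    proof -
      consider "i = 1" | "i = 2" | "i = 3" using exhaust_3[of i] by blast
      then show ?thesis
      proof cases
      case 1 show ?thesis unfolding 1 using a1 l1 t1 tv tb1 m1 Lvv by (intro conjI; linarith)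
    next
      case 2 show ?thesis unfolding 2 using a2 l2 t2 tv tb2 m2 Lvv by (intro conjI; linarith)
    next
      case 3 show ?thesis unfolding 3 C0_def using a3 l3p t3' tv tb3 Lvv by (intro conjI; linarith)
      qed
    qed
    then show "\<And>i. 0 < Lv$i \<and> Lv$i \<le> t$i - l$i \<and> l$i \<le> Lv$i \<and> 2 * l$i \<le> t$i \<and> t$i \<le> C0 * l$i" by blast
  qed
  define P where "P = cbox x0 (x0 + l)"
  have memP: "p \<in> P \<longleftrightarrow> (\<forall>i. x0$i \<le> p$i \<and> p$i \<le> x0$i + l$i)" for p by (simp add: P_def mem_box_cart)
  have memR: "q \<in> R \<longleftrightarrow> (\<forall>i. a$i \<le> q$i \<and> q$i \<le> a$i + l$i)" for q by (simp add: Rab mem_box_cart l_def)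
  have tdef: "t$i = \<bar>x0$i - a$i\<bar>" for i by (simp add: t_def)
  have bal: "b$i = a$i + l$i" for i by (simp add: l_def)
  have distPR: "Lv$i \<le> \<bar>p$i - q$i\<bar>" if "p \<in> P" "q \<in> R" for p q i
  proof -
    have "t$i - l$i \<le> \<bar>p$i - q$i\<bar>"
      using coord_dist[of "a$i + l$i" "a$i" "l$i" "t$i" "x0$i" "p$i" "q$i"] that memP memR tdef by blast
    then show ?thesis using coordf[of i] by linarith
  qed
  have x0P: "x0 \<in> P" and aR: "a \<in> R" using lpos memP memR by (auto simp: less_imp_le)
  have C0ge: "1 \<le> C0" unfolding C0_def using mult_mono[of 1 M 1 "A^2"] M A2 by simp
  have adm: "adm_pair C0 R P"
    unfolding adm_pair_def
  proof (intro conjI)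
    show "zyg_rect R" by fact
    show "zyg_rect P" unfolding zyg_rect_def P_def
    proof (intro exI conjI)
      show "cbox x0 (x0 + l) = cbox x0 (x0 + l)" ..
      show "\<forall>i. x0 $ i < (x0 + l) $ i" using lpos by simp
      show "(x0 + l) $ 3 - x0 $ 3 = ((x0 + l) $ 1 - x0 $ 1) * ((x0 + l) $ 2 - x0 $ 2)" using l3' by simp
    qed
    show "\<exists>a' b' c' d'. R = cbox a' b' \<and> P = cbox c' d' \<and>
        (\<forall>i. d'$i - c'$i = b'$i - a'$i \<and>
             (b'$i - a'$i) / C0 \<le> setdist {a'$i..b'$i} {c'$i..d'$i} \<and>
             setdist {a'$i..b'$i} {c'$i..d'$i} \<le> C0 * (b'$i - a'$i))"
    proof (intro exI conjI allI)
      show "R = cbox a b" by fact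
      show "P = cbox x0 (x0 + l)" by (simp add: P_def)
      fix i
      have sd: "setdist {a$i..b$i} {x0$i..(x0 + l)$i} = t$i - l$i"
        using coord_setdist[of "b$i" "a$i" "l$i" "t$i" "x0$i"] bal lpos tdef coordf[of i] by simp
      show "(x0 + l)$i - x0$i = b$i - a$i" by (simp add: l_def)
      have li: "0 < l$i" using lpos by simp
      have "l$i / C0 \<le> l$i" using C0ge li by (simp add: divide_le_eq)
      then show "(b$i - a$i) / C0 \<le> setdist {a$i..b$i} {x0$i..(x0 + l)$i}"
        unfolding sd using coordf[of i] bal by simp
      show "setdist {a$i..b$i} {x0$i..(x0 + l)$i} \<le> C0 * (b$i - a$i)"
        unfolding sd using coordf[of i] bal li by simp
    qed
  qed
  have Lvpos: "\<forall>i. 0 < Lv$i" using coordf by blast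
  define LL where "LL = Lv$1 * Lv$2 * Lv$3"
  have LLv: "LL = A^4 * measure lborel R / 8" unfolding LL_def Lvv measR
    by (simp add: power2_eq_square power4_eq_xxxx)
  have LLpos: "0 < LL" using Lvpos by (simp add: LL_def)
  have combo_dist: "Lv$i \<le> \<bar>p$i - q$i\<bar>"
    if "\<forall>j. p$j = x$j \<or> p$j = x'$j" "\<forall>j. q$j = y$j \<or> q$j = y'$j" "x \<in> P" "x' \<in> P" "y \<in> R" "y' \<in> R"
    for p q x x' y y' i
    using distPR[OF in_box_combo[OF that(1) that(3)[unfolded P_def] that(4)[unfolded P_def], folded P_def]
                    in_box_combo[OF that(2) that(5)[unfolded Rab] that(6)[unfolded Rab], folded Rab]] .
  have chainPR: "cmod (K x' y' - K x y) \<le> 4 * Ck * \<omega> s1 / LL"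
    if "x \<in> P" "x' \<in> P" "y \<in> R" "y' \<in> R" "0 \<le> s1" "s1 \<le> 1"
       "\<forall>i. \<bar>x$i - x'$i\<bar> \<le> s1/2 * Lv$i" "\<forall>i. \<bar>y$i - y'$i\<bar> \<le> s1/2 * Lv$i" for x x' y y' s1
    unfolding LL_def
    by (rule chain[OF sm Ck th mono nonneg Lvpos combo_dist[OF _ _ that(1-4)] that(5-8)])
  have lLv: "l$i \<le> (4/A)/2 * Lv$i" for i
  proof -
    have "(4/A)/2 * Lv$1 = l$1" "(4/A)/2 * Lv$2 = l$2" "(4/A)/2 * Lv$3 = A * l$3"
      using A0 by (simp_all add: Lvv power2_eq_square)
    moreover have "l$3 \<le> A * l$3"
    proof -
      have "0 < l$3" using lpos by simp
      then show ?thesis using A by (simp add: mult_le_cancel_right1)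
    qed
    ultimately show ?thesis using exhaust_3[of i] by auto
  qed
  have close: "cmod (K x y - K0) \<le> cmod K0 / 2" if "x \<in> P" "y \<in> R" for x y
  proof -
    have dx: "\<forall>i. \<bar>x0$i - x$i\<bar> \<le> (4/A)/2 * Lv$i"
    proof
      fix i have "x0$i \<le> x$i \<and> x$i \<le> x0$i + l$i" using that(1) memP by blast
      then have "\<bar>x0$i - x$i\<bar> \<le> l$i" by (simp add: abs_if)
      then show "\<bar>x0$i - x$i\<bar> \<le> (4/A)/2 * Lv$i" using lLv[of i] by linarith
    qed
    have dy: "\<forall>i. \<bar>a$i - y$i\<bar> \<le> (4/A)/2 * Lv$i"
    proof
      fix i have "a$i \<le> y$i \<and> y$i \<le> a$i + l$i" using that(2) memR by blast
      then have "\<bar>a$i - y$i\<bar> \<le> l$i" by (simp add: abs_if)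
      then show "\<bar>a$i - y$i\<bar> \<le> (4/A)/2 * Lv$i" using lLv[of i] by linarith
    qed
    have s1: "0 \<le> 4/A" "4/A \<le> 1" using A by simp_all
    have "cmod (K x y - K0) \<le> 4 * Ck * \<omega> (4/A) / LL"
      unfolding K0_def by (rule chainPR[OF x0P that(1) aR that(2) s1 dx dy])
    also have "\<dots> = 32 * (Ck * \<omega> (4/A)) / (A^4 * measure lborel R)" unfolding LLv by simp
    also have "\<dots> \<le> 32 * (Ck * (c/(64*Ck))) / (A^4 * measure lborel R)"
      using ws0 Ck A0 Rpos by (intro divide_right_mono mult_left_mono) auto
    also have "\<dots> = (c / (A^4 * measure lborel R)) / 2" using Ck by simp
    also have "\<dots> \<le> cmod K0 / 2" using lowK by simp
    finally show ?thesis .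
  qed
  have cont: "continuous_on (P \<times> R) (\<lambda>z. K (fst z) (snd z))"
    unfolding continuous_on_iff
  proof (intro ballI allI impI)
    fix z :: "(real^3) \<times> (real^3)" and e :: real
    assume z: "z \<in> P \<times> R" and e: "0 < e"
    define \<epsilon> where "\<epsilon> = e * LL / (8 * Ck)"
    have \<epsilon>pos: "0 < \<epsilon>" using e LLpos Ck by (simp add: \<epsilon>_def)
    obtain \<eta> where \<eta>: "0 < \<eta>" "\<forall>s. 0 < s \<and> s < \<eta> \<longrightarrow> \<omega> s < \<epsilon>" using smallw[OF \<epsilon>pos] by blast
    define s1 where "s1 = min (\<eta>/2) 1"
    have s1: "0 < s1" "s1 \<le> 1" "s1 < \<eta>" using \<eta> by (auto simp: s1_def)
    define Lm where "Lm = min (Lv$1) (min (Lv$2) (Lv$3))"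
    have Lm: "0 < Lm" using Lvpos by (simp add: Lm_def)
    have Lmi: "Lm \<le> Lv$i" for i using exhaust_3[of i] by (auto simp: Lm_def)
    show "\<exists>d>0. \<forall>z'\<in>P \<times> R. dist z' z < d \<longrightarrow> dist (K (fst z') (snd z')) (K (fst z) (snd z)) < e"
    proof (intro exI[of _ "s1/2 * Lm"] conjI ballI impI)
      show "0 < s1/2 * Lm" using s1 Lm by simp
      fix z' assume z': "z' \<in> P \<times> R" and dz: "dist z' z < s1/2 * Lm"
      have bnd: "s1/2 * Lm \<le> s1/2 * Lv$i" for i using Lmi[of i] s1 by (intro mult_left_mono) auto
      have dxi: "\<forall>i. \<bar>fst z$i - fst z'$i\<bar> \<le> s1/2 * Lv$i"
      proof
        fix i
        have "\<bar>fst z$i - fst z'$i\<bar> \<le> norm (fst z - fst z')"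
          using component_le_norm_cart[of "fst z - fst z'" i] by simp
        also have "\<dots> = dist (fst z) (fst z')" by (simp add: dist_norm)
        also have "\<dots> \<le> dist z z'" by (rule dist_fst_le)
        finally show "\<bar>fst z$i - fst z'$i\<bar> \<le> s1/2 * Lv$i" using dz bnd[of i] by (simp add: dist_commute)
      qed
      have dyi: "\<forall>i. \<bar>snd z$i - snd z'$i\<bar> \<le> s1/2 * Lv$i"
      proof
        fix i
        have "\<bar>snd z$i - snd z'$i\<bar> \<le> norm (snd z - snd z')"
          using component_le_norm_cart[of "snd z - snd z'" i] by simp
        also have "\<dots> = dist (snd z) (snd z')" by (simp add: dist_norm)
        also have "\<dots> \<le> dist z z'" by (rule dist_snd_le)
        finally show "\<bar>snd z$i - snd z'$i\<bar> \<le> s1/2 * Lv$i" using dz bnd[of i] by (simp add: dist_commute)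
      qed
      have zz: "fst z \<in> P" "snd z \<in> R" "fst z' \<in> P" "snd z' \<in> R" using z z' by auto
      have "dist (K (fst z') (snd z')) (K (fst z) (snd z)) = cmod (K (fst z') (snd z') - K (fst z) (snd z))"
        by (simp add: dist_norm)
      also have "\<dots> \<le> 4 * Ck * \<omega> s1 / LL"
        by (rule chainPR[OF zz(1) zz(3) zz(2) zz(4) _ s1(2) dxi dyi]) (use s1 in simp)
      also have "\<dots> \<le> 4 * Ck * \<epsilon> / LL"
        using \<eta>(2) s1 Ck LLpos by (intro divide_right_mono mult_left_mono) (auto simp: less_imp_le)
      also have "\<dots> = e / 2" using Ck LLpos by (simp add: \<epsilon>_def)
      also have "\<dots> < e" using e by simp
      finally show "dist (K (fst z') (snd z')) (K (fst z) (snd z)) < e" .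
    qed
  qed
  have measP: "measure lborel P = measure lborel R"
  proof -
    have "x0 \<in> cbox x0 (x0 + l)" using x0P by (simp add: P_def)
    then have "cbox x0 (x0 + l) \<noteq> {}" by blast
    then have "measure lborel P = l$1 * l$2 * l$3"
      unfolding P_def using content_cbox_cart[of x0 "x0 + l"] prod_UNIV_3[of "\<lambda>i. (x0 + l)$i - x0$i"] by simp
    then show ?thesis using measR by simp
  qed
  have K0nz: "K0 \<noteq> 0"
  proof -
    have "0 < c / (A^4 * measure lborel R)" using c A0 Rpos by simp
    then show ?thesis using lowK by auto
  qed
  show ?thesis
    by (rule that[OF adm[unfolded C0_def] _ _ measP Rpos cont close K0nz lowK])
       (simp_all add: P_def Rab compact_cbox)
qed


theorem mainTheorem3:
  fixes \<theta> :: real and K :: "real^3 \<Rightarrow> real^3 \<Rightarrow> complex"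
  assumes "0 < \<theta>" and "\<theta> \<le> 1"
    and "zygmund_kernel \<theta> K" and "non_degenerate K"
  shows "\<exists>C0\<ge>1. \<exists>C>0. \<forall>(b::real^3 \<Rightarrow> real) (u::real) (t::real) R.
           locally_integrable b \<and> 1 < u \<and> 1 < t \<and> zyg_rect R \<longrightarrow>
           ereal (osc b R) \<le> ereal C * Off K b C0 u t * ereal (measure lborel R powr (1/u - 1/t))"
proof -
  note th = assms(1)
  obtain Ck \<omega> where Ck: "0 < Ck" and mono: "mono_on {0..1} \<omega>" and nonneg: "\<forall>s\<in>{0..1}. 0 \<le> \<omega> s"
      and lim: "(\<omega> \<longlongrightarrow> 0) (at_right 0)"
      and size: "\<forall>x y. off_Delta x y \<longrightarrow> cmod (K x y) \<le> Ck * SZv \<theta> x y" and sm: "zsmooth \<theta> K Ck \<omega>"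
    using zyg_unpack[OF assms(3)] by blast
  obtain c where c: "0 < c" and nd0: "\<forall>y \<delta>1 \<delta>2. 0 < \<delta>1 \<and> 0 < \<delta>2 \<longrightarrow>
       (\<exists>x. \<delta>1 < \<bar>x$1 - y$1\<bar> \<and> \<delta>2 < \<bar>x$2 - y$2\<bar> \<and> \<delta>1 * \<delta>2 < \<bar>x$3 - y$3\<bar> \<and>
            c * \<delta>1 powr -2 * \<delta>2 powr -2 \<le> cmod (K x y))"
    using assms(4) unfolding non_degenerate_def by blast
  have nd: "\<And>y \<delta>1 \<delta>2. 0 < \<delta>1 \<Longrightarrow> 0 < \<delta>2 \<Longrightarrow> \<exists>x. \<delta>1 < \<bar>x$1 - y$1\<bar> \<and> \<delta>2 < \<bar>x$2 - y$2\<bar> \<and>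
            \<delta>1 * \<delta>2 < \<bar>x$3 - y$3\<bar> \<and> c * \<delta>1 powr -2 * \<delta>2 powr -2 \<le> cmod (K x y)"
    using nd0 by blast
  have smallw: "\<exists>\<eta>>0. \<forall>s. 0 < s \<and> s < \<eta> \<longrightarrow> \<omega> s < \<epsilon>" if "0 < \<epsilon>" for \<epsilon>
  proof -
    have "eventually (\<lambda>s. dist (\<omega> s) 0 < \<epsilon>) (at_right 0)" by (rule tendstoD[OF lim that])
    then obtain b where b: "b > 0" "\<forall>s>0. s < b \<longrightarrow> dist (\<omega> s) 0 < \<epsilon>"
      unfolding eventually_at_right_field by auto
    show ?thesis
      by (rule exI[of _ b]) (use b in \<open>auto simp: dist_real_def\<close>)
  qed
  obtain \<eta> where \<eta>: "0 < \<eta>" "\<forall>s. 0 < s \<and> s < \<eta> \<longrightarrow> \<omega> s < c/(64*Ck)"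
    using smallw[of "c/(64*Ck)"] c Ck by auto
  define A where "A = max 4 (8/\<eta>)"
  have A4: "4 \<le> A" by (simp add: A_def)
  have A0: "0 < A" using A4 by simp
  have ws0: "\<omega> (4/A) < c/(64*Ck)"
  proof -
    have "8/\<eta> \<le> A" by (simp add: A_def)
    then have "8 \<le> A * \<eta>" using \<eta>(1) by (simp add: divide_le_eq)
    then have "4 < \<eta> * A" using A0 \<eta>(1) by (simp add: mult.commute)
    then have "4/A < \<eta>" using A0 by (simp add: divide_less_eq)
    then show ?thesis using \<eta>(2) A0 by simp
  qed
  define M where "M = max 1 (Ck/c)"
  have M: "Ck/c \<le> M" "1 \<le> M" by (simp_all add: M_def)
  define C0 where "C0 = M * A^2"
  define Cst where "Cst = 8 * A^4 / c"
  have g1: "1 \<le> C0"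
  proof -
    have "1 * 1 \<le> A * A" using A4 by (intro mult_mono) auto
    then show "1 \<le> C0" unfolding C0_def using mult_mono[of 1 M 1 "A^2"] M A4
      by (simp add: power2_eq_square)
  qed
  have g2: "0 < Cst" using c A0 by (simp add: Cst_def)
  have g3: "ereal (osc b R) \<le> ereal Cst * Off K b C0 u t * ereal (measure lborel R powr (1/u - 1/t))"
    if H: "locally_integrable b \<and> 1 < u \<and> 1 < t \<and> zyg_rect R" for b u t R
  proof -
    have zR: "zyg_rect R" and li: "locally_integrable b" using H by auto
    obtain P K0 where adm: "adm_pair (M*A^2) R P" and cP: "compact P" and cR: "compact R"
        and mPR: "measure lborel P = measure lborel R" and Rpos: "0 < measure lborel R"
        and cont: "continuous_on (P \<times> R) (\<lambda>z. K (fst z) (snd z))"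
        and close: "\<And>x y. x \<in> P \<Longrightarrow> y \<in> R \<Longrightarrow> cmod (K x y - K0) \<le> cmod K0 / 2"
        and K0: "K0 \<noteq> 0" and lowK: "c / (A^4 * measure lborel R) \<le> cmod K0"
      using geometry[OF th Ck mono nonneg size sm smallw c nd A4 ws0 M zR] by blast
    have bm[measurable]: "b \<in> borel_measurable lborel" by (rule locint_meas[OF li])
    have bR: "set_integrable lborel R b" and bP: "set_integrable lborel P b"
      using li cR cP unfolding locally_integrable_def by auto
    have Rm[measurable]: "R \<in> sets lborel" and Pm[measurable]: "P \<in> sets lborel"
      using cR cP by (simp_all add: compact_imp_closed borel_closed)
    have Rfin: "emeasure lborel R < \<infinity>" and Pfin: "emeasure lborel P < \<infinity>"
      using emeasure_compact_finite cR cP by auto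
    define \<beta> where "\<beta> = avg b R"
    define Fs where "Fs \<sigma> = {x \<in> P. \<sigma>*(b x - \<beta>) \<le> 0}" for \<sigma> :: real
    have Fsm: "Fs \<sigma> \<in> sets lborel" for \<sigma> unfolding Fs_def by measurable
    have Fsfin: "emeasure lborel (Fs \<sigma>) \<noteq> \<infinity>" for \<sigma>
      using emeasure_mono[of "Fs \<sigma>" P lborel] Pm Pfin by (auto simp: Fs_def)
    have "measure lborel P \<le> measure lborel (Fs 1) + measure lborel (Fs (-1))"
    proof -
      have "P = Fs 1 \<union> Fs (-1)" by (auto simp: Fs_def)
      then show ?thesis using measure_subadditive[OF Fsm Fsm Fsfin Fsfin] by simp
    qed
    then have "\<exists>\<sigma>::real. (\<sigma> = 1 \<or> \<sigma> = -1) \<and> measure lborel P / 2 \<le> measure lborel (Fs \<sigma>)"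
    proof (cases "measure lborel P / 2 \<le> measure lborel (Fs 1)")
      case True then show ?thesis by blast
    next
      case False
      assume "measure lborel P \<le> measure lborel (Fs 1) + measure lborel (Fs (-1))"
      then have "measure lborel P / 2 \<le> measure lborel (Fs (-1))" using False by linarith
      then show ?thesis by blast
    qed
    then obtain \<sigma> where sg: "\<sigma> = 1 \<or> \<sigma> = -1" and Fbig: "measure lborel P / 2 \<le> measure lborel (Fs \<sigma>)"
      by blast
    define E where "E = {y \<in> R. 0 \<le> \<sigma>*(b y - \<beta>)}"
    define F where "F = Fs \<sigma>"
    have Fdef: "F = {x \<in> P. \<sigma>*(b x - \<beta>) \<le> 0}" by (simp add: F_def Fs_def)
    define I where "I = (\<integral>y. indicator R y * max 0 (\<sigma>*(b y - \<beta>)) \<partial>lborel)"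
    define B where "B = bil K b R P (indicator E) (indicator F)"
    have est: "cmod K0 / 2 * measure lborel F * I \<le> cmod B"
      unfolding I_def B_def
      by (rule main_est[OF cR cP cont close K0 bm bR bP sg E_def Fdef])
    have oscI: "osc b R * measure lborel R = 2 * I"
      using osc_split[OF bR Rm Rfin Rpos bm sg] Rpos unfolding osc_def I_def \<beta>_def by simp
    have I0: "0 \<le> I" unfolding I_def by (intro integral_nonneg_AE) (auto simp: indicator_def)
    have oscle: "osc b R \<le> Cst * (cmod B / measure lborel R)"
    proof -
      define mR where "mR = measure lborel R"
      have mR0: "0 < mR" using Rpos by (simp add: mR_def)
      have A40: "0 < A^4" using A0 by simp
      have F0: "measure lborel R / 2 \<le> measure lborel F" using Fbig mPR by (simp add: F_def)
      have "c / (A^4 * mR) / 2 * (mR / 2) * I \<le> cmod K0 / 2 * measure lborel F * I"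
      proof (intro mult_right_mono[OF _ I0] mult_mono)
        show "c / (A^4 * mR) / 2 \<le> cmod K0 / 2" using lowK by (simp add: mR_def)
        show "mR / 2 \<le> measure lborel F" using F0 by (simp add: mR_def)
        show "0 \<le> cmod K0 / 2" by simp
        show "0 \<le> mR / 2" using mR0 by simp
      qed
      also have "\<dots> \<le> cmod B" by (rule est)
      finally have ineq: "c / (A^4 * mR) / 2 * (mR / 2) * I \<le> cmod B" .
      have eq: "c * (osc b R * mR) / (8 * A^4) = c / (A^4 * mR) / 2 * (mR / 2) * I"
        using oscI mR0 A40 unfolding mR_def[symmetric] by (simp add: field_simps)
      have "c * (osc b R * mR) / (8 * A^4) \<le> cmod B" unfolding eq by (rule ineq)
      then have "c * (osc b R * mR) \<le> cmod B * (8 * A^4)" using A40 by (simp add: divide_le_eq)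
      then have h: "c * (osc b R * mR) / (c * mR) \<le> cmod B * (8 * A^4) / (c * mR)"
        using c mR0 by (intro divide_right_mono) auto
      have "osc b R = c * (osc b R * mR) / (c * mR)" using c mR0 by simp
      also have "\<dots> \<le> cmod B * (8 * A^4) / (c * mR)" by (rule h)
      also have "\<dots> = Cst * (cmod B / mR)" by (simp add: Cst_def)
      finally show ?thesis by (simp add: mR_def)
    qed
    have OffB: "ereal (cmod B / measure lborel R powr (1 + 1/u - 1/t)) \<le> Off K b C0 u t"
    proof -
      have Em: "E \<in> sets lborel" unfolding E_def by measurable
      have Fm: "F \<in> sets lborel" unfolding F_def by (rule Fsm)
      have mem: "(R, P, indicator E, indicator F) \<in> {(P1, P2, f1, f2). adm_pair C0 P1 P2 \<and>
          f1 \<in> borel_measurable lborel \<and> f2 \<in> borel_measurable lborel \<and>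
          (\<forall>y. cmod (f1 y) \<le> 1) \<and> (\<forall>x. cmod ((f2::real^3 \<Rightarrow> complex) x) \<le> 1)}"
        using adm Em Fm by (auto simp: C0_def indicator_def)
      show ?thesis
        using SUP_upper[OF mem, of "\<lambda>(P1, P2, f1, f2). ereal (cmod (bil K b P1 P2 f1 f2) / measure lborel P1 powr (1 + 1/u - 1/t))"]
        unfolding Off_def B_def by simp
    qed
    have split: "cmod B / measure lborel R = (cmod B / measure lborel R powr (1 + 1/u - 1/t)) * measure lborel R powr (1/u - 1/t)"
    proof -
      have "measure lborel R powr (1 + 1/u - 1/t) = measure lborel R powr 1 * measure lborel R powr (1/u - 1/t)"
        by (subst powr_add[symmetric]) (simp add: algebra_simps)
      then have e: "measure lborel R powr (1 + 1/u - 1/t) = measure lborel R * measure lborel R powr (1/u - 1/t)"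
        using Rpos by simp
      have "0 < measure lborel R powr (1/u - 1/t)" using Rpos by simp
      then show ?thesis unfolding e using Rpos by (simp add: field_simps)
    qed
    have "ereal (osc b R) \<le> ereal Cst * (ereal (cmod B / measure lborel R powr (1 + 1/u - 1/t)) * ereal (measure lborel R powr (1/u - 1/t)))"
      using oscle unfolding split by simp
    also have "\<dots> \<le> ereal Cst * (Off K b C0 u t * ereal (measure lborel R powr (1/u - 1/t)))"
      using g2 by (intro ereal_mult_left_mono ereal_mult_right_mono OffB) auto
    finally show ?thesis by (simp add: mult.assoc)
  qed
  show ?thesis using g1 g2 g3 by blast
qed


end
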